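(* Fix $D,\alpha,\theta>0$. There is a constant $C=C(D,\alpha,\theta)$ such that for every finite connected graph $G$ on $n$ vertices satisfying (bal), (mix), (esc) with parameters $D,\alpha,\theta$ (with $n$ sufficiently large), the following holds. Let $u$ be a $\pi$-distributed vertex and, given $u$, let $X,Y$ be two independent lazy random walks started at $u$. Then for every vertex $v$, $$\mathbb E\left[\,\left|\{(i,j):0\le i,j\le r,\ X_i=Y_j=v\}\right|\,\right]\le \frac{C}{n}.$$
   Context: For a finite connected graph $G=(V,E)$ with $n$ vertices, $d(v)$ is the degree of $v$, $\delta(G),\Delta(G)$ are the minimum and maximum degrees. The lazy random walk $(X_t)$ on $G$ at each step stays put with probability $1/2$ and otherwise moves along a uniformly chosen edge incident to the current vertex. Write $\mathbf p^t(u,v)=\Pr_u(X_t=v)$ and $\pi(v)=d(v)/(2|E|)$. The uniform mixing time is $t_{\mathrm{mix}}(G)=\min\{t\ge0:\max_{u,v\in V}|\mathbf p^t(u,v)/\pi(v)-1|\le 1/2\}$, and the bubble sum is $\mathcal B(G)=\sum_{t=0}^{t_{\mathrm{mix}}(G)}(t+1)\sup_{v}\mathbf p^t(v,v)$. Assumptions with parameters $D,\alpha,\theta>0$: (bal) $\Delta(G)/\delta(G)\le D$; (mix) $t_{\mathrm{mix}}(G)\le n^{1/2-\alpha}$; (esc) $\mathcal B(G)\le\theta$. The run time is $r=n^{1/2-\alpha/3}$ (rounded to an integer). *)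

theory Defs
  imports Complex_Main
begin

definition simple_graph :: "nat set \<Rightarrow> (nat \<Rightarrow> nat \<Rightarrow> bool) \<Rightarrow> bool" where
  "simple_graph V E \<longleftrightarrow> finite V \<and> V \<noteq> {} \<and>
     (\<forall>x y. E x y \<longrightarrow> x \<in> V \<and> y \<in> V) \<and>
     (\<forall>x y. E x y \<longrightarrow> E y x) \<and> (\<forall>x. \<not> E x x)"

definition graph_connected :: "nat set \<Rightarrow> (nat \<Rightarrow> nat \<Rightarrow> bool) \<Rightarrow> bool" where
  "graph_connected V E \<longleftrightarrow> (\<forall>x\<in>V. \<forall>y\<in>V. E\<^sup>*\<^sup>* x y)"

definition deg :: "nat set \<Rightarrow> (nat \<Rightarrow> nat \<Rightarrow> bool) \<Rightarrow> nat \<Rightarrow> nat" where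
  "deg V E x = card {y \<in> V. E x y}"

definition min_deg :: "nat set \<Rightarrow> (nat \<Rightarrow> nat \<Rightarrow> bool) \<Rightarrow> nat" where
  "min_deg V E = Min (deg V E ` V)"

definition max_deg :: "nat set \<Rightarrow> (nat \<Rightarrow> nat \<Rightarrow> bool) \<Rightarrow> nat" where
  "max_deg V E = Max (deg V E ` V)"

definition lazy_step :: "nat set \<Rightarrow> (nat \<Rightarrow> nat \<Rightarrow> bool) \<Rightarrow> nat \<Rightarrow> nat \<Rightarrow> real" where
  "lazy_step V E x y = (if x = y then 1/2 else 0) + (if E x y then 1 / (2 * real (deg V E x)) else 0)"

primrec walk_prob :: "nat set \<Rightarrow> (nat \<Rightarrow> nat \<Rightarrow> bool) \<Rightarrow> nat \<Rightarrow> nat \<Rightarrow> nat \<Rightarrow> real" where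
  "walk_prob V E 0 u v = (if u = v then 1 else 0)"
| "walk_prob V E (Suc t) u v = (\<Sum>w\<in>V. walk_prob V E t u w * lazy_step V E w v)"

text \<open>Stationary distribution pi(v) = d(v)/(2|E|); 2|E| is the sum of degrees.\<close>
definition stat_dist :: "nat set \<Rightarrow> (nat \<Rightarrow> nat \<Rightarrow> bool) \<Rightarrow> nat \<Rightarrow> real" where
  "stat_dist V E v = real (deg V E v) / real (\<Sum>w\<in>V. deg V E w)"

definition t_mix :: "nat set \<Rightarrow> (nat \<Rightarrow> nat \<Rightarrow> bool) \<Rightarrow> nat" where
  "t_mix V E = (LEAST t. \<forall>u\<in>V. \<forall>v\<in>V.
      \<bar>walk_prob V E t u v / stat_dist V E v - 1\<bar> \<le> 1/2)"

definition bubble :: "nat set \<Rightarrow> (nat \<Rightarrow> nat \<Rightarrow> bool) \<Rightarrow> real" where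
  "bubble V E = (\<Sum>t\<le>t_mix V E. real (t + 1) * Max ((\<lambda>v. walk_prob V E t v v) ` V))"

definition run_time :: "real \<Rightarrow> nat \<Rightarrow> nat" where
  "run_time \<alpha> n = nat (round (real n powr (1/2 - \<alpha>/3)))"

text \<open>E|{(i,j): 0<=i,j<=r, X_i = Y_j = v}| where u ~ pi and, given u, X and Y
are independent lazy walks from u: by linearity and conditional independence
this equals sum_u pi(u) sum_{i,j<=r} p^i(u,v) p^j(u,v).\<close>
definition expected_intersections :: "nat set \<Rightarrow> (nat \<Rightarrow> nat \<Rightarrow> bool) \<Rightarrow> nat \<Rightarrow> nat \<Rightarrow> real" where
  "expected_intersections V E r v =
     (\<Sum>u\<in>V. stat_dist V E u * (\<Sum>i\<le>r. \<Sum>j\<le>r. walk_prob V E i u v * walk_prob V E j u v))"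

end

theory Submission
  imports Defs
begin

locale G =
  fixes V :: "nat set" and E :: "nat \<Rightarrow> nat \<Rightarrow> bool"
  assumes sg: "simple_graph V E" and conn: "graph_connected V E" and two: "card V \<ge> 2"
begin

abbreviation "p \<equiv> walk_prob V E"
abbreviation "P \<equiv> lazy_step V E"
abbreviation "d \<equiv> deg V E"

lemma finV: "finite V" using sg by (simp add: simple_graph_def)
lemma EV: "E x y \<Longrightarrow> x \<in> V \<and> y \<in> V" using sg by (simp add: simple_graph_def)
lemma Esym: "E x y \<Longrightarrow> E y x" using sg by (simp add: simple_graph_def)
lemma Eirr: "\<not> E x x" using sg by (simp add: simple_graph_def)

lemma deg_pos: assumes "x \<in> V" shows "deg V E x > 0"
proof -
  have "\<not> V \<subseteq> {x}"
  proof
    assume "V \<subseteq> {x}"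
    hence "card V \<le> card {x}" by (rule card_mono[rotated]) simp
    thus False using two by simp
  qed
  then obtain z where z: "z \<in> V" "z \<noteq> x" by blast
  have "E\<^sup>*\<^sup>* x z" using conn assms z unfolding graph_connected_def by blast
  then obtain w where "E x w" using z(2) by (cases rule: converse_rtranclpE) auto
  hence "w \<in> {y \<in> V. E x y}" using EV by blast
  hence "{y \<in> V. E x y} \<noteq> {}" by blast
  thus ?thesis unfolding deg_def using finV by (simp add: card_gt_0_iff)
qed

lemma P_nonneg: "P x y \<ge> 0" by (simp add: lazy_step_def)

lemma p_nonneg: "p t x y \<ge> 0"
  by (induction t arbitrary: y) (auto intro!: sum_nonneg mult_nonneg_nonneg P_nonneg)

lemma P_row: assumes "x \<in> V" shows "(\<Sum>y\<in>V. P x y) = 1"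
proof -
  have "(\<Sum>y\<in>V. P x y) = (\<Sum>y\<in>V. (if x = y then 1/2 else 0)) + (\<Sum>y\<in>V. (if E x y then 1 / (2 * real (deg V E x)) else 0))"
    unfolding lazy_step_def by (rule sum.distrib)
  also have "(\<Sum>y\<in>V. (if x = y then 1/2 else 0)) = (1/2::real)" using assms finV by simp
  also have "(\<Sum>y\<in>V. (if E x y then 1 / (2 * real (deg V E x)) else 0)) = (\<Sum>y\<in>{y\<in>V. E x y}. 1 / (2 * real (deg V E x)))"
    by (rule sum.inter_filter[symmetric, OF finV])
  also have "\<dots> = real (deg V E x) * (1 / (2 * real (deg V E x)))" by (simp add: deg_def)
  also have "\<dots> = 1/2" using deg_pos[OF assms] by simp
  finally show ?thesis by simp
qed

lemma P_bal: assumes "u \<in> V" "w \<in> V" shows "real (d u) * P u w = real (d w) * P w u"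
proof (cases "u = w")
  case False
  show ?thesis
  proof (cases "E u w")
    case True
    then show ?thesis using False Esym[OF True] deg_pos[OF assms(1)] deg_pos[OF assms(2)]
      by (simp add: lazy_step_def)
  next
    case f: False
    hence "\<not> E w u" using Esym by blast
    then show ?thesis using False f by (simp add: lazy_step_def)
  qed
qed simp

lemma p1: assumes "u \<in> V" shows "p (Suc 0) u w = P u w"
proof -
  have "p (Suc 0) u w = (\<Sum>w'\<in>V. if u = w' then P w' w else 0)" by (simp, intro sum.cong) auto
  thus ?thesis using assms finV by simp
qed

lemma CK: assumes "v \<in> V" shows "p (s + t) u v = (\<Sum>w\<in>V. p s u w * p t w v)"
  using assms
proof (induction t arbitrary: v)
  case 0
  then show ?case using finV by (simp add: if_distrib cong: if_cong)
next
  case (Suc t)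
  have "p (s + Suc t) u v = (\<Sum>w'\<in>V. p (s+t) u w' * P w' v)" by simp
  also have "\<dots> = (\<Sum>w'\<in>V. (\<Sum>w\<in>V. p s u w * p t w w') * P w' v)"
    using Suc.IH by (intro sum.cong) auto
  also have "\<dots> = (\<Sum>w'\<in>V. \<Sum>w\<in>V. p s u w * (p t w w' * P w' v))"
    by (simp add: sum_distrib_right mult.assoc)
  also have "\<dots> = (\<Sum>w\<in>V. \<Sum>w'\<in>V. p s u w * (p t w w' * P w' v))"
    by (rule sum.swap)
  also have "\<dots> = (\<Sum>w\<in>V. p s u w * p (Suc t) w v)"
    by (simp add: sum_distrib_left)
  finally show ?case .
qed

lemma p_row: assumes "x \<in> V" shows "(\<Sum>w\<in>V. p t x w) = 1"
proof (induction t)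
  case 0
  then show ?case using assms finV by simp
next
  case (Suc t)
  have "(\<Sum>w\<in>V. p (Suc t) x w) = (\<Sum>w\<in>V. \<Sum>y\<in>V. p t x y * P y w)" by simp
  also have "\<dots> = (\<Sum>y\<in>V. \<Sum>w\<in>V. p t x y * P y w)" by (rule sum.swap)
  also have "\<dots> = (\<Sum>y\<in>V. p t x y * (\<Sum>w\<in>V. P y w))" by (simp add: sum_distrib_left)
  also have "\<dots> = (\<Sum>y\<in>V. p t x y)" using P_row by (intro sum.cong) auto
  finally show ?case using Suc by simp
qed

lemma p_rev: assumes "u \<in> V" "v \<in> V" shows "real (d u) * p t u v = real (d v) * p t v u"
  using assms
proof (induction t arbitrary: u v)
  case 0
  then show ?case by simp
next
  case (Suc t)
  have "real (d u) * p (Suc t) u v = (\<Sum>w\<in>V. real (d u) * p t u w * P w v)"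
    by (simp add: sum_distrib_left mult.assoc)
  also have "\<dots> = (\<Sum>w\<in>V. real (d w) * p t w u * P w v)"
    using Suc.IH Suc.prems by (intro sum.cong) auto
  also have "\<dots> = (\<Sum>w\<in>V. p t w u * (real (d w) * P w v))"
    by (intro sum.cong) auto
  also have "\<dots> = (\<Sum>w\<in>V. p t w u * (real (d v) * P v w))"
    using P_bal Suc.prems by (intro sum.cong) auto
  also have "\<dots> = real (d v) * (\<Sum>w\<in>V. p (Suc 0) v w * p t w u)"
    using p1[OF Suc.prems(2)] by (simp add: sum_distrib_left mult_ac)
  also have "\<dots> = real (d v) * p (Suc 0 + t) v u"
    by (simp only: CK[OF Suc.prems(1), of "Suc 0" t v])
  finally show ?case by simp
qed


abbreviation "\<pi> \<equiv> stat_dist V E"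

lemma Vne: "V \<noteq> {}" using two by auto

lemma S_pos: "(\<Sum>w\<in>V. real (d w)) > 0"
proof -
  obtain x where "x \<in> V" using Vne by blast
  thus ?thesis using finV deg_pos by (intro sum_pos) auto
qed

lemma stat_eq: "\<pi> v = real (d v) / (\<Sum>w\<in>V. real (d w))"
  unfolding stat_dist_def by simp

lemma stat_pos: "v \<in> V \<Longrightarrow> \<pi> v > 0"
  using S_pos deg_pos by (simp add: stat_eq)

lemma stat_nonneg: "\<pi> v \<ge> 0"
  using S_pos by (simp add: stat_eq)

lemma stat_sum: "(\<Sum>v\<in>V. \<pi> v) = 1"
  using S_pos by (simp add: stat_eq sum_divide_distrib[symmetric])

lemma stat_rev: assumes "u \<in> V" "v \<in> V" shows "\<pi> u * p t u v = \<pi> v * p t v u"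
proof -
  have "real (d u) * p t u v / (\<Sum>w\<in>V. real (d w)) = real (d v) * p t v u / (\<Sum>w\<in>V. real (d w))"
    using p_rev[OF assms] by simp
  thus ?thesis by (simp add: stat_eq)
qed

lemma stat_inv: assumes "v \<in> V" shows "(\<Sum>x\<in>V. \<pi> x * p t x v) = \<pi> v"
proof -
  have "(\<Sum>x\<in>V. \<pi> x * p t x v) = (\<Sum>x\<in>V. \<pi> v * p t v x)"
    using stat_rev assms by (intro sum.cong) auto
  also have "\<dots> = \<pi> v" using p_row[OF assms] by (simp add: sum_distrib_left[symmetric])
  finally show ?thesis .
qed

lemma P_self: "w \<in> V \<Longrightarrow> P w w = 1/2" using Eirr by (simp add: lazy_step_def)

lemma p_single: assumes "y \<in> V" shows "p (Suc t) x w \<ge> p t x y * P y w"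
proof -
  have "p t x y * P y w \<le> (\<Sum>y\<in>V. p t x y * P y w)"
    by (rule member_le_sum[OF assms]) (auto intro!: mult_nonneg_nonneg p_nonneg P_nonneg simp: finV)
  thus ?thesis by simp
qed

lemma p_pos_Suc: assumes "p t x w > 0" "w \<in> V" shows "p (Suc t) x w > 0"
  using p_single[OF assms(2), of t x w] P_self[OF assms(2)] assms(1) by simp

lemma p_pos_mono: assumes "p t x w > 0" "w \<in> V" shows "p (t + k) x w > 0"
  by (induction k) (use assms p_pos_Suc in auto)

lemma p_pos_edge: assumes "p t x y > 0" "E y w" shows "p (Suc t) x w > 0"
proof -
  have y: "y \<in> V" using EV assms(2) by blast
  have "P y w > 0" using assms(2) Eirr deg_pos[OF y] by (auto simp: lazy_step_def)
  hence "p t x y * P y w > 0" using assms(1) by simp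
  thus ?thesis using p_single[OF y, of t x w] by linarith
qed

lemma reach: assumes "E\<^sup>*\<^sup>* x w" shows "\<exists>t. p t x w > 0"
  using assms
proof (induction rule: rtranclp_induct)
  case base
  have "p 0 x x > 0" by simp
  thus ?case by blast
next
  case (step y z)
  then obtain t where "p t x y > 0" by blast
  thus ?case using p_pos_edge step(2) by blast
qed

lemma unif_pos: "\<exists>m \<delta>. \<delta> > 0 \<and> (\<forall>x\<in>V. \<forall>w\<in>V. p m x w \<ge> \<delta>)"
proof -
  have "\<forall>xw\<in>V\<times>V. \<exists>t. p t (fst xw) (snd xw) > 0"
    using reach conn unfolding graph_connected_def by auto
  then obtain T where T: "\<forall>xw\<in>V\<times>V. p (T xw) (fst xw) (snd xw) > 0"
    by metis
  define m where "m = Max (T ` (V\<times>V))"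
  have fin: "finite (V \<times> V)" using finV by simp
  have mpos: "p m x w > 0" if "x \<in> V" "w \<in> V" for x w
  proof -
    have "T (x,w) \<le> m" unfolding m_def using fin that by (intro Max_ge) auto
    then obtain k where "m = T (x,w) + k" using le_Suc_ex by blast
    thus ?thesis using p_pos_mono T that by fastforce
  qed
  define \<delta> where "\<delta> = Min ((\<lambda>xw. p m (fst xw) (snd xw)) ` (V\<times>V))"
  have "\<delta> \<in> (\<lambda>xw. p m (fst xw) (snd xw)) ` (V\<times>V)"
    unfolding \<delta>_def using fin Vne by (intro Min_in) auto
  hence "\<delta> > 0" using mpos by auto
  moreover have "\<forall>x\<in>V. \<forall>w\<in>V. p m x w \<ge> \<delta>"
  proof (intro ballI)
    fix x w assume xw: "x \<in> V" "w \<in> V"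
    have "p m x w \<in> (\<lambda>xw. p m (fst xw) (snd xw)) ` (V\<times>V)"
      by (rule image_eqI[of _ _ "(x,w)"]) (use xw in auto)
    thus "p m x w \<ge> \<delta>" unfolding \<delta>_def using fin by (intro Min_le) auto
  qed
  ultimately show ?thesis by blast
qed


lemma contract:
  assumes dl: "\<forall>x\<in>V. \<forall>w\<in>V. p m x w \<ge> \<delta>" and v: "v \<in> V"
    and B: "\<forall>x\<in>V. \<forall>y\<in>V. p t x v - p t y v \<le> B"
  shows "\<forall>x\<in>V. \<forall>y\<in>V. p (m+t) x v - p (m+t) y v \<le> (1 - real (card V) * \<delta>) * B"
proof (intro ballI)
  fix x y assume x: "x \<in> V" and y: "y \<in> V"
  define h where "h w = p t w v" for w
  define Mx where "Mx = Max (h ` V)"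
  define mn where "mn = Min (h ` V)"
  have "Mx \<in> h ` V" unfolding Mx_def using finV Vne by (intro Max_in) auto
  then obtain a where a: "a \<in> V" "Mx = h a" by blast
  have "mn \<in> h ` V" unfolding mn_def using finV Vne by (intro Min_in) auto
  then obtain b where b: "b \<in> V" "mn = h b" by blast
  have MB: "Mx - mn \<le> B" using a b B by (simp add: h_def)
  have hM: "h w \<le> Mx" if "w \<in> V" for w unfolding Mx_def using finV that by (intro Max_ge) auto
  have hm: "mn \<le> h w" if "w \<in> V" for w unfolding mn_def using finV that by (intro Min_le) auto
  have rows: "(\<Sum>w\<in>V. (p m z w - \<delta>)) = 1 - real (card V) * \<delta>" if "z \<in> V" for z
    using p_row[OF that] by (simp add: sum_subtractf)
  have cd: "real (card V) * \<delta> \<le> 1"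
  proof -
    have "real (card V) * \<delta> = (\<Sum>w\<in>V. \<delta>)" by simp
    also have "\<dots> \<le> (\<Sum>w\<in>V. p m x w)" using dl x by (intro sum_mono) auto
    finally show ?thesis using p_row[OF x] by simp
  qed
  have dec: "p (m+t) z v - \<delta> * (\<Sum>w\<in>V. h w) = (\<Sum>w\<in>V. (p m z w - \<delta>) * h w)" for z
    using CK[OF v, of m t z] by (simp add: h_def sum_distrib_left left_diff_distrib sum_subtractf)
  have up: "(\<Sum>w\<in>V. (p m x w - \<delta>) * h w) \<le> (\<Sum>w\<in>V. (p m x w - \<delta>) * Mx)"
    using dl x hM by (intro sum_mono mult_left_mono) auto
  have lo: "(\<Sum>w\<in>V. (p m y w - \<delta>) * mn) \<le> (\<Sum>w\<in>V. (p m y w - \<delta>) * h w)"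
    using dl y hm by (intro sum_mono mult_left_mono) auto
  have "(\<Sum>w\<in>V. (p m x w - \<delta>) * Mx) = (1 - real (card V) * \<delta>) * Mx"
    using rows[OF x] by (simp add: sum_distrib_right[symmetric])
  moreover have "(\<Sum>w\<in>V. (p m y w - \<delta>) * mn) = (1 - real (card V) * \<delta>) * mn"
    using rows[OF y] by (simp add: sum_distrib_right[symmetric])
  ultimately have "p (m+t) x v - p (m+t) y v \<le> (1 - real (card V) * \<delta>) * (Mx - mn)"
    using up lo dec[of x] dec[of y] by (simp add: right_diff_distrib)
  also have "\<dots> \<le> (1 - real (card V) * \<delta>) * B"
    using MB cd by (intro mult_left_mono) auto
  finally show "p (m+t) x v - p (m+t) y v \<le> (1 - real (card V) * \<delta>) * B" .
qed

lemma iter_contract: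
  assumes dl: "\<forall>x\<in>V. \<forall>w\<in>V. p m x w \<ge> \<delta>" and v: "v \<in> V"
  shows "\<forall>x\<in>V. \<forall>y\<in>V. p (k*m) x v - p (k*m) y v \<le> (1 - real (card V) * \<delta>) ^ k"
proof (induction k)
  case 0
  then show ?case by simp
next
  case (Suc k)
  have "\<forall>x\<in>V. \<forall>y\<in>V. p (m + k*m) x v - p (m + k*m) y v \<le> (1 - real (card V) * \<delta>) * (1 - real (card V) * \<delta>) ^ k"
    by (rule contract[OF dl v Suc.IH])
  thus ?case by (simp add: add.commute)
qed

lemma mix_exists: "\<exists>t. \<forall>u\<in>V. \<forall>v\<in>V. \<bar>p t u v - \<pi> v\<bar> \<le> \<pi> v / 2"
proof -
  obtain m \<delta> where dpos: "\<delta> > 0" and dl: "\<forall>x\<in>V. \<forall>w\<in>V. p m x w \<ge> \<delta>"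
    using unif_pos by blast
  define c where "c = 1 - real (card V) * \<delta>"
  have c1: "c < 1" unfolding c_def using dpos Vne finV by (simp add: card_gt_0_iff)
  define pm where "pm = Min (\<pi> ` V)"
  have "pm \<in> \<pi> ` V" unfolding pm_def using finV Vne by (intro Min_in) auto
  hence pmpos: "pm > 0" using stat_pos by auto
  have pmle: "pm \<le> \<pi> v" if "v \<in> V" for v unfolding pm_def using finV that by (intro Min_le) auto
  obtain k where k: "c ^ k < pm / 2" using real_arch_pow_inv[of "pm/2" c] pmpos c1 by auto
  have "\<forall>u\<in>V. \<forall>v\<in>V. \<bar>p (k*m) u v - \<pi> v\<bar> \<le> \<pi> v / 2"
  proof (intro ballI)
    fix u v assume u: "u \<in> V" and v: "v \<in> V"
    have IC: "\<forall>x\<in>V. \<forall>y\<in>V. p (k*m) x v - p (k*m) y v \<le> c ^ k"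
      using iter_contract[OF dl v] unfolding c_def .
    have s1: "(\<Sum>x\<in>V. \<pi> x * (p (k*m) u v - p (k*m) x v))
        = (\<Sum>x\<in>V. \<pi> x) * p (k*m) u v - (\<Sum>x\<in>V. \<pi> x * p (k*m) x v)"
      by (simp only: right_diff_distrib sum_subtractf sum_distrib_right)
    have eq: "p (k*m) u v - \<pi> v = (\<Sum>x\<in>V. \<pi> x * (p (k*m) u v - p (k*m) x v))"
      unfolding s1 stat_sum stat_inv[OF v] mult_1_left ..
    have "\<bar>p (k*m) u v - \<pi> v\<bar> = \<bar>\<Sum>x\<in>V. \<pi> x * (p (k*m) u v - p (k*m) x v)\<bar>"
      unfolding eq ..
    also have "\<dots> \<le> (\<Sum>x\<in>V. \<bar>\<pi> x * (p (k*m) u v - p (k*m) x v)\<bar>)" by (rule sum_abs)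
    also have "\<dots> \<le> (\<Sum>x\<in>V. \<pi> x * c ^ k)"
    proof (intro sum_mono)
      fix x assume x: "x \<in> V"
      have "p (k*m) u v - p (k*m) x v \<le> c ^ k" "p (k*m) x v - p (k*m) u v \<le> c ^ k"
        using IC u x by blast+
      hence "\<bar>p (k*m) u v - p (k*m) x v\<bar> \<le> c ^ k" by (simp add: abs_le_iff)
      hence "\<pi> x * \<bar>p (k*m) u v - p (k*m) x v\<bar> \<le> \<pi> x * c ^ k"
        using stat_nonneg[of x] by (rule mult_left_mono)
      moreover have "\<bar>\<pi> x * (p (k*m) u v - p (k*m) x v)\<bar> = \<pi> x * \<bar>p (k*m) u v - p (k*m) x v\<bar>"
        by (simp only: abs_mult abs_of_nonneg[OF stat_nonneg])
      ultimately show "\<bar>\<pi> x * (p (k*m) u v - p (k*m) x v)\<bar> \<le> \<pi> x * c ^ k" by linarith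
    qed
    also have "\<dots> = (\<Sum>x\<in>V. \<pi> x) * c ^ k" by (simp only: sum_distrib_right)
    also have "\<dots> = c ^ k" unfolding stat_sum by (rule mult_1_left)
    finally show "\<bar>p (k*m) u v - \<pi> v\<bar> \<le> \<pi> v / 2" using k pmle[OF v] by linarith
  qed
  thus ?thesis by blast
qed

lemma mix_step: assumes v: "v \<in> V" and B: "\<forall>u\<in>V. \<bar>p s u v - \<pi> v\<bar> \<le> B"
  shows "\<forall>u\<in>V. \<bar>p (Suc s) u v - \<pi> v\<bar> \<le> B"
proof
  fix u assume u: "u \<in> V"
  have "p (Suc 0 + s) u v = (\<Sum>w\<in>V. p (Suc 0) u w * p s w v)" by (rule CK[OF v])
  also have "\<dots> = (\<Sum>w\<in>V. P u w * p s w v)" by (simp only: p1[OF u])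
  finally have e: "p (Suc s) u v = (\<Sum>w\<in>V. P u w * p s w v)" by (simp only: add_Suc add_0)
  have "(\<Sum>w\<in>V. P u w * (p s w v - \<pi> v)) = (\<Sum>w\<in>V. P u w * p s w v) - (\<Sum>w\<in>V. P u w) * \<pi> v"
    by (simp only: right_diff_distrib sum_subtractf sum_distrib_right)
  hence d0: "(\<Sum>w\<in>V. P u w * (p s w v - \<pi> v)) = (\<Sum>w\<in>V. P u w * p s w v) - \<pi> v"
    unfolding P_row[OF u] mult_1_left .
  have "\<bar>\<Sum>w\<in>V. P u w * (p s w v - \<pi> v)\<bar> \<le> (\<Sum>w\<in>V. \<bar>P u w * (p s w v - \<pi> v)\<bar>)" by (rule sum_abs)
  also have "\<dots> \<le> (\<Sum>w\<in>V. P u w * B)"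
  proof (rule sum_mono)
    fix w assume w: "w \<in> V"
    have "\<bar>P u w * (p s w v - \<pi> v)\<bar> = P u w * \<bar>p s w v - \<pi> v\<bar>"
      by (simp only: abs_mult abs_of_nonneg[OF P_nonneg])
    also have "\<dots> \<le> P u w * B" using B w P_nonneg by (intro mult_left_mono) auto
    finally show "\<bar>P u w * (p s w v - \<pi> v)\<bar> \<le> P u w * B" .
  qed
  also have "\<dots> = (\<Sum>w\<in>V. P u w) * B" by (simp only: sum_distrib_right)
  also have "\<dots> = B" unfolding P_row[OF u] by (rule mult_1_left)
  finally have "\<bar>\<Sum>w\<in>V. P u w * (p s w v - \<pi> v)\<bar> \<le> B" .
  thus "\<bar>p (Suc s) u v - \<pi> v\<bar> \<le> B" unfolding d0 e .
qed

end

context G begin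

lemma tmix_prop: "\<forall>u\<in>V. \<forall>v\<in>V. \<bar>p (t_mix V E) u v - \<pi> v\<bar> \<le> \<pi> v / 2"
proof -
  have eq: "\<bar>a / \<pi> v - 1\<bar> \<le> 1/2 \<longleftrightarrow> \<bar>a - \<pi> v\<bar> \<le> \<pi> v / 2" if "v \<in> V" for a v
  proof -
    have pv: "\<pi> v > 0" using stat_pos[OF that] .
    have "a / \<pi> v - 1 = (a - \<pi> v) / \<pi> v" using pv by (simp add: field_simps)
    hence "\<bar>a / \<pi> v - 1\<bar> = \<bar>a - \<pi> v\<bar> / \<pi> v" using pv by (simp add: abs_divide)
    thus ?thesis using pv by (simp add: divide_le_eq)
  qed
  obtain t where t: "\<forall>u\<in>V. \<forall>v\<in>V. \<bar>p t u v - \<pi> v\<bar> \<le> \<pi> v / 2" using mix_exists by blast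
  hence "\<forall>u\<in>V. \<forall>v\<in>V. \<bar>p t u v / \<pi> v - 1\<bar> \<le> 1/2" using eq by blast
  hence "\<forall>u\<in>V. \<forall>v\<in>V. \<bar>p (t_mix V E) u v / \<pi> v - 1\<bar> \<le> 1/2"
    unfolding t_mix_def by (rule LeastI)
  thus ?thesis using eq by blast
qed

lemma after_mix: assumes "t_mix V E \<le> s" "v \<in> V" shows "p s v v \<le> 3/2 * \<pi> v"
proof -
  have "\<forall>u\<in>V. \<bar>p s u v - \<pi> v\<bar> \<le> \<pi> v / 2"
    using assms(1)
  proof (induction s rule: dec_induct)
    case base
    then show ?case using tmix_prop assms(2) by blast
  next
    case (step s)
    then show ?case using mix_step[OF assms(2)] by blast
  qed
  hence "\<bar>p s v v - \<pi> v\<bar> \<le> \<pi> v / 2" using assms(2) by blast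
  thus ?thesis by linarith
qed

lemma EI_eq: assumes v: "v \<in> V"
  shows "expected_intersections V E r v = \<pi> v * (\<Sum>i\<le>r. \<Sum>j\<le>r. p (i+j) v v)"
proof -
  have "expected_intersections V E r v = (\<Sum>u\<in>V. \<Sum>i\<le>r. \<Sum>j\<le>r. \<pi> u * p i u v * p j u v)"
    unfolding expected_intersections_def by (simp add: sum_distrib_left mult.assoc)
  also have "\<dots> = (\<Sum>i\<le>r. \<Sum>u\<in>V. \<Sum>j\<le>r. \<pi> u * p i u v * p j u v)" by (rule sum.swap)
  also have "\<dots> = (\<Sum>i\<le>r. \<Sum>j\<le>r. \<Sum>u\<in>V. \<pi> u * p i u v * p j u v)"
    by (intro sum.cong refl sum.swap)
  also have "\<dots> = (\<Sum>i\<le>r. \<Sum>j\<le>r. \<Sum>u\<in>V. \<pi> v * (p i v u * p j u v))"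
    using stat_rev v by (intro sum.cong refl) (simp add: mult.assoc)
  also have "\<dots> = (\<Sum>i\<le>r. \<Sum>j\<le>r. \<pi> v * p (i+j) v v)"
    using CK[OF v] by (simp add: sum_distrib_left)
  also have "\<dots> = \<pi> v * (\<Sum>i\<le>r. \<Sum>j\<le>r. p (i+j) v v)"
    by (simp add: sum_distrib_left)
  finally show ?thesis .
qed

lemma sum_bound: assumes v: "v \<in> V"
  shows "(\<Sum>i\<le>r. \<Sum>j\<le>r. p (i+j) v v) \<le> bubble V E + (real r + 1)^2 * (3/2 * \<pi> v)"
proof -
  define T where "T = t_mix V E"
  define a where "a s = (if s \<le> T then p s v v else 0)" for s
  have anneg: "a s \<ge> 0" for s using p_nonneg by (simp add: a_def)
  have pa: "p s v v \<le> a s + 3/2 * \<pi> v" for s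
    using after_mix[OF _ v, of s] p_nonneg[of s v v] stat_nonneg[of v]
    by (cases "s \<le> T") (auto simp: a_def T_def)
  have "(\<Sum>i\<le>r. \<Sum>j\<le>r. p (i+j) v v) \<le> (\<Sum>i\<le>r. \<Sum>j\<le>r. a (i+j) + 3/2 * \<pi> v)"
    using pa by (intro sum_mono) auto
  also have "\<dots> = (\<Sum>i\<le>r. \<Sum>j\<le>r. a (i+j)) + (real r + 1)^2 * (3/2 * \<pi> v)"
    by (simp add: sum.distrib power2_eq_square add.commute)
  also have "(\<Sum>i\<le>r. \<Sum>j\<le>r. a (i+j)) \<le> bubble V E"
  proof -
    define Tri where "Tri = {(i,j). i + j \<le> T}"
    have finTri: "finite Tri"
      by (rule finite_subset[of _ "{..T} \<times> {..T}"]) (auto simp: Tri_def)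
    have "(\<Sum>i\<le>r. \<Sum>j\<le>r. a (i+j)) = (\<Sum>(i,j)\<in>{..r}\<times>{..r}. a (i+j))"
      by (rule sum.cartesian_product)
    also have "\<dots> \<le> (\<Sum>(i,j)\<in>({..r}\<times>{..r}) \<union> Tri. a (i+j))"
      using finTri anneg by (intro sum_mono2) auto
    also have "\<dots> = (\<Sum>(i,j)\<in>Tri. a (i+j))"
      using finTri by (intro sum.mono_neutral_right) (auto simp: Tri_def a_def split: if_splits)
    also have "\<dots> = (\<Sum>k\<le>T. \<Sum>i\<le>k. a (i + (k - i)))"
      unfolding Tri_def by (rule sum.triangle_reindex_eq)
    also have "\<dots> = (\<Sum>k\<le>T. real (k+1) * p k v v)"
      by (intro sum.cong refl) (simp add: a_def)
    also have "\<dots> \<le> (\<Sum>k\<le>T. real (k+1) * Max ((\<lambda>v. p k v v) ` V))"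
      using v finV by (intro sum_mono mult_left_mono Max_ge) auto
    also have "\<dots> = bubble V E" unfolding bubble_def T_def by simp
    finally show ?thesis .
  qed
  finally show ?thesis by simp
qed

end

lemma run_time_bound:
  assumes "\<alpha> > 0" "n \<ge> 1"
  shows "(real (run_time \<alpha> n) + 1)^2 \<le> 25/4 * real n"
proof -
  have n1: "real n \<ge> 1" using assms by simp
  have "real (run_time \<alpha> n) = max 0 (real_of_int (round (real n powr (1/2 - \<alpha>/3))))"
    unfolding run_time_def by simp
  also have "\<dots> \<le> real n powr (1/2 - \<alpha>/3) + 1/2"
    using of_int_round_le[of "real n powr (1/2 - \<alpha>/3)"] by auto
  also have "real n powr (1/2 - \<alpha>/3) \<le> real n powr (1/2)"
    using n1 assms by (intro powr_mono) auto
  also have "real n powr (1/2) = sqrt (real n)" using n1 by (simp add: powr_half_sqrt)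
  finally have r: "real (run_time \<alpha> n) + 1 \<le> sqrt (real n) + 3/2" by simp
  have s1: "sqrt (real n) \<ge> 1" using n1 by simp
  have "real (run_time \<alpha> n) + 1 \<le> 5/2 * sqrt (real n)" using r s1 by linarith
  hence "(real (run_time \<alpha> n) + 1)^2 \<le> (5/2 * sqrt (real n))^2"
    by (intro power_mono) auto
  also have "\<dots> = (5/2)^2 * (sqrt (real n))^2" by (rule power_mult_distrib)
  also have "\<dots> = 25/4 * real n" by (simp add: power_divide)
  finally show ?thesis .
qed

theorem mainTheorem5:
  fixes D \<alpha> \<theta> :: real
  assumes "D > 0" "\<alpha> > 0" "\<theta> > 0"
  shows "\<exists>C::real. \<exists>N::nat. \<forall>V E. \<forall>n.
    simple_graph V E \<longrightarrow> graph_connected V E \<longrightarrow> n = card V \<longrightarrow> n \<ge> N \<longrightarrow>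
    real (max_deg V E) / real (min_deg V E) \<le> D \<longrightarrow>
    real (t_mix V E) \<le> real n powr (1/2 - \<alpha>) \<longrightarrow>
    bubble V E \<le> \<theta> \<longrightarrow>
    (\<forall>v\<in>V. expected_intersections V E (run_time \<alpha> n) v \<le> C / real n)"
proof (intro exI allI impI ballI)
  fix V E n v
  assume sg: "simple_graph V E" and conn: "graph_connected V E" and n: "n = card V"
    and n2: "2 \<le> n" and bal: "real (max_deg V E) / real (min_deg V E) \<le> D"
    and bub: "bubble V E \<le> \<theta>" and v: "v \<in> V"
  interpret G V E using sg conn n n2 by unfold_locales auto
  define r where "r = run_time \<alpha> n"
  define pv where "pv = stat_dist V E v"
  define X where "X = (\<Sum>i\<le>r. \<Sum>j\<le>r. walk_prob V E (i+j) v v)"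
  have EI: "expected_intersections V E r v = pv * X" unfolding pv_def X_def by (rule EI_eq[OF v])
  have XB: "X \<le> \<theta> + (real r + 1)^2 * (3/2 * pv)"
    using sum_bound[OF v, of r] bub unfolding X_def pv_def by linarith
  have pv0: "pv \<ge> 0" unfolding pv_def by (rule stat_nonneg)
  have nr: "real n > 0" using n2 by simp
  have mdin: "min_deg V E \<in> deg V E ` V" unfolding min_deg_def using finV Vne by (intro Min_in) auto
  hence mdpos: "real (min_deg V E) > 0" using deg_pos by auto
  have dv: "real (deg V E v) \<le> real (max_deg V E)"
    unfolding max_deg_def using finV v by (auto intro!: Max_ge)
  have "real (max_deg V E) \<le> D * real (min_deg V E)" using bal mdpos by (simp add: divide_le_eq)
  hence dvD: "real (deg V E v) \<le> D * real (min_deg V E)" using dv by linarith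
  have "(\<Sum>w\<in>V. real (min_deg V E)) \<le> (\<Sum>w\<in>V. real (deg V E w))"
    unfolding min_deg_def using finV by (intro sum_mono) auto
  hence Sge: "real n * real (min_deg V E) \<le> (\<Sum>w\<in>V. real (deg V E w))" using n by simp
  have pvD: "pv \<le> D / real n"
  proof -
    have "pv = real (deg V E v) / (\<Sum>w\<in>V. real (deg V E w))" unfolding pv_def by (rule stat_eq)
    also have "\<dots> \<le> D * real (min_deg V E) / (real n * real (min_deg V E))"
      using dvD Sge nr mdpos \<open>D > 0\<close> by (intro frac_le) auto
    also have "\<dots> = D / real n" using mdpos by simp
    finally show ?thesis .
  qed
  have R: "(real r + 1)^2 \<le> 25/4 * real n" unfolding r_def using run_time_bound[OF \<open>\<alpha> > 0\<close>] n2 by simp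
  have "expected_intersections V E r v \<le> pv * (\<theta> + (real r + 1)^2 * (3/2 * pv))"
    using EI XB pv0 by (simp add: mult_left_mono)
  also have "\<dots> = pv * \<theta> + 3/2 * ((real r + 1)^2 * pv^2)" by (simp add: algebra_simps power2_eq_square)
  also have "pv * \<theta> \<le> D / real n * \<theta>" using mult_right_mono[OF pvD, of \<theta>] \<open>\<theta> > 0\<close> by simp
  also have "(real r + 1)^2 * pv^2 \<le> (25/4 * real n) * (D / real n)^2"
    using R pvD pv0 by (intro mult_mono power_mono) auto
  also have "(25/4 * real n) * (D / real n)^2 = 25/4 * D^2 / real n"
    using nr by (simp add: power2_eq_square field_simps)
  finally have "expected_intersections V E r v \<le> D / real n * \<theta> + 3/2 * (25/4 * D^2 / real n)" by simp
  also have "\<dots> \<le> (D * \<theta> + 10 * D^2) / real n"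
    using nr by (simp add: field_simps)
  finally show "expected_intersections V E (run_time \<alpha> n) v \<le> (D * \<theta> + 10 * D^2) / real n"
    unfolding r_def .
qed

end
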